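(* Let $a\in\mathbb F^*$, let $g,h\in\mathcal R$ satisfy $x^n-a=hg$, and let $f\in\mathcal R$. Then $$M^\theta_a(\overline{fg})=M^\theta_c(\overline f)\,M^\theta_a(\overline g),\qquad\text{where } c=\gamma(a,g).$$
   Context: $\mathbb F$ is a finite field, $\theta\in\mathrm{Aut}(\mathbb F)$, and $\mathcal R=\mathbb F[x;\theta]$ is the skew polynomial ring: elements $\sum_i f_ix^i$ with $f_i\in\mathbb F$ on the left, usual addition, multiplication determined by $xb=\theta(b)x$ for $b\in\mathbb F$. Fix $n\in\mathbb N$. For $b\in\mathbb F^*$, $\mathcal S_b=\mathcal R/\mathcal R(x^n-b)$ (a left $\mathcal R$-module); $\overline f$ denotes the coset of $f$, and in $M^\theta_b(\overline f)$ the coset is taken in $\mathcal S_b$. Let $\mathfrak v_b:\mathcal S_b\to\mathbb F^n$ be the inverse of the isomorphism $(c_0,\dots,c_{n-1})\mapsto\overline{\sum_{i=0}^{n-1}c_ix^i}$. The $(\theta,b)$-circulant $M^\theta_b(\overline f)$ is the $n\times n$ matrix whose row with index $i$ ($i=0,\dots,n-1$) is $\mathfrak v_b(\overline{x^if})$. For a right divisor $g=\sum g_ix^i$ of $x^n-a$ (so $g_0\ne0$), $\gamma(a,g)=a\,g_0^{-1}\theta^n(g_0)$. *)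

theory Defs
  imports "HOL-Computational_Algebra.Polynomial" "Jordan_Normal_Form.Matrix"
begin

text \<open>Skew polynomials over a field are represented by their (left) coefficients,
  i.e. by elements of type 'a poly; only addition of 'a poly is used, the
  multiplication of the skew polynomial ring is skew_mult below.\<close>

definition field_aut :: "('a::field \<Rightarrow> 'a) \<Rightarrow> bool" where
  "field_aut \<theta> \<longleftrightarrow> bij \<theta> \<and> (\<forall>x y. \<theta> (x + y) = \<theta> x + \<theta> y \<and> \<theta> (x * y) = \<theta> x * \<theta> y)"

definition skew_mult :: "('a::field \<Rightarrow> 'a) \<Rightarrow> 'a poly \<Rightarrow> 'a poly \<Rightarrow> 'a poly" where
  "skew_mult \<theta> f g =
     (\<Sum>i\<le>degree f. \<Sum>j\<le>degree g. monom (coeff f i * (\<theta> ^^ i) (coeff g j)) (i + j))"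

definition xn_minus :: "nat \<Rightarrow> 'a::field \<Rightarrow> 'a poly" where
  "xn_minus n b = monom 1 n - [:b:]"

text \<open>Congruence modulo the left ideal R (x^n - b), i.e. equality of cosets in S_b.\<close>
definition skew_cong :: "('a::field \<Rightarrow> 'a) \<Rightarrow> nat \<Rightarrow> 'a \<Rightarrow> 'a poly \<Rightarrow> 'a poly \<Rightarrow> bool" where
  "skew_cong \<theta> n b f g \<longleftrightarrow> (\<exists>q. f - g = skew_mult \<theta> q (xn_minus n b))"

definition vb :: "('a::field \<Rightarrow> 'a) \<Rightarrow> nat \<Rightarrow> 'a \<Rightarrow> 'a poly \<Rightarrow> 'a vec" where
  "vb \<theta> n b f = (THE c. c \<in> carrier_vec n \<and>
      skew_cong \<theta> n b f (\<Sum>i<n. monom (c $ i) i))"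

definition skew_circulant :: "('a::field \<Rightarrow> 'a) \<Rightarrow> nat \<Rightarrow> 'a \<Rightarrow> 'a poly \<Rightarrow> 'a mat" where
  "skew_circulant \<theta> n b f =
     mat n n (\<lambda>(i, j). vb \<theta> n b (skew_mult \<theta> (monom 1 i) f) $ j)"

definition skew_gamma :: "('a::field \<Rightarrow> 'a) \<Rightarrow> nat \<Rightarrow> 'a \<Rightarrow> 'a poly \<Rightarrow> 'a" where
  "skew_gamma \<theta> n a g = a * inverse (coeff g 0) * (\<theta> ^^ n) (coeff g 0)"

end

theory Submission imports Defs begin

locale skew = fixes \<theta> :: "'a::field \<Rightarrow> 'a" assumes aut: "field_aut \<theta>"
begin

lemma th_add: "\<theta> (x + y) = \<theta> x + \<theta> y" and th_mult: "\<theta> (x * y) = \<theta> x * \<theta> y"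
  using aut unfolding field_aut_def by auto

lemma th_0: "\<theta> 0 = 0"
proof -
  have "\<theta> 0 + \<theta> 0 = \<theta> 0 + 0" using th_add[of 0 0] by simp
  then show ?thesis by (rule add_left_imp_eq)
qed

lemma th_1: "\<theta> 1 = 1"
proof -
  obtain y where "\<theta> y = 1" using aut unfolding field_aut_def bij_def surj_def by metis
  then show ?thesis using th_mult[of 1 y] by simp
qed

lemma th_inj: "\<theta> x = 0 \<longleftrightarrow> x = 0"
proof -
  have "inj \<theta>" using aut unfolding field_aut_def bij_def by auto
  then show ?thesis using th_0 by (metis injD)
qed

lemma T_add: "(\<theta>^^i) (x + y) = (\<theta>^^i) x + (\<theta>^^i) y"
  by (induction i) (auto simp: th_add)
lemma T_mult: "(\<theta>^^i) (x * y) = (\<theta>^^i) x * (\<theta>^^i) y"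
  by (induction i) (auto simp: th_mult)
lemma T_0[simp]: "(\<theta>^^i) 0 = 0"
  by (induction i) (auto simp: th_0)
lemma T_1[simp]: "(\<theta>^^i) 1 = 1"
  by (induction i) (auto simp: th_1)
lemma T_inj[simp]: "(\<theta>^^i) x = 0 \<longleftrightarrow> x = 0"
  by (induction i) (auto simp: th_inj)
lemma T_neg: "(\<theta>^^i) (- x) = - (\<theta>^^i) x"
proof -
  have "(\<theta>^^i) x + (\<theta>^^i) (-x) = 0" using T_add[of i x "-x"] by simp
  then show ?thesis by (metis minus_unique)
qed
lemma T_diff: "(\<theta>^^i) (x - y) = (\<theta>^^i) x - (\<theta>^^i) y"
  using T_add[of i x "-y"] T_neg[of i y] by simp

abbreviation TP :: "nat \<Rightarrow> 'a poly \<Rightarrow> 'a poly" where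
  "TP i p \<equiv> map_poly (\<theta>^^i) p"

lemma coeff_TP[simp]: "coeff (TP i p) k = (\<theta>^^i) (coeff p k)"
  by (simp add: coeff_map_poly)

lemma TP_add: "TP i (p + q) = TP i p + TP i q"
  by (rule poly_eqI) (simp add: T_add)
lemma TP_monom: "TP i (monom c k) = monom ((\<theta>^^i) c) k"
  by (simp add: map_poly_monom)
lemma TP_monom_mult: "TP i (monom d j * p) = monom ((\<theta>^^i) d) j * TP i p"
  by (rule poly_eqI) (simp add: coeff_monom_mult T_mult)
lemma TP_TP: "TP i (TP j p) = TP (i + j) p"
  by (simp add: map_poly_map_poly funpow_add)
lemma degree_TP: "degree (TP i p) \<le> degree p"
  by (rule degree_le) (simp add: coeff_eq_0)

lemma rep: "skew_mult \<theta> f g = (\<Sum>i\<le>degree f. monom (coeff f i) i * TP i g)"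
proof -
  have "(\<Sum>j\<le>degree g. monom (coeff f i * (\<theta>^^i) (coeff g j)) (i + j)) = monom (coeff f i) i * TP i g" for i
  proof -
    have "(\<Sum>j\<le>degree g. monom (coeff f i * (\<theta>^^i) (coeff g j)) (i + j))
        = monom (coeff f i) i * (\<Sum>j\<le>degree g. monom (coeff (TP i g) j) j)"
      by (simp add: sum_distrib_left mult_monom)
    also have "(\<Sum>j\<le>degree g. monom (coeff (TP i g) j) j) = TP i g"
      by (rule poly_as_sum_of_monoms'[OF degree_TP])
    finally show ?thesis .
  qed
  then show ?thesis unfolding skew_mult_def by simp
qed

lemma repN: assumes "degree f \<le> N"
  shows "skew_mult \<theta> f g = (\<Sum>i\<le>N. monom (coeff f i) i * TP i g)"
  unfolding rep
  by (rule sum.mono_neutral_left) (use assms in \<open>auto simp: coeff_eq_0\<close>)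

lemma sm_add_left: "skew_mult \<theta> (f1 + f2) g = skew_mult \<theta> f1 g + skew_mult \<theta> f2 g"
proof -
  define N where "N = max (degree f1) (degree f2)"
  have "degree (f1 + f2) \<le> N" unfolding N_def by (rule degree_add_le_max)
  then show ?thesis
    using repN[of f1 N g] repN[of f2 N g] repN[of "f1+f2" N g]
    by (simp add: N_def add_monom[symmetric] distrib_right sum.distrib)
qed

lemma sm_0_left[simp]: "skew_mult \<theta> 0 g = 0"
  by (simp add: rep)

lemma sm_0_right[simp]: "skew_mult \<theta> f 0 = 0"
  by (simp add: rep)

lemma sm_neg_left: "skew_mult \<theta> (- f) g = - skew_mult \<theta> f g"
proof -
  have "skew_mult \<theta> f g + skew_mult \<theta> (-f) g = 0" using sm_add_left[of f "-f" g] by simp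
  then show ?thesis by (metis minus_unique)
qed

lemma sm_diff_left: "skew_mult \<theta> (f1 - f2) g = skew_mult \<theta> f1 g - skew_mult \<theta> f2 g"
  using sm_add_left[of f1 "-f2" g] sm_neg_left[of f2 g] by simp

lemma sm_add_right: "skew_mult \<theta> f (g1 + g2) = skew_mult \<theta> f g1 + skew_mult \<theta> f g2"
  by (simp add: rep TP_add distrib_left sum.distrib)

lemma sm_neg_right: "skew_mult \<theta> f (- g) = - skew_mult \<theta> f g"
proof -
  have "skew_mult \<theta> f g + skew_mult \<theta> f (-g) = 0" using sm_add_right[of f g "-g"] by simp
  then show ?thesis by (metis minus_unique)
qed

lemma sm_diff_right: "skew_mult \<theta> f (g1 - g2) = skew_mult \<theta> f g1 - skew_mult \<theta> f g2"
  using sm_add_right[of f g1 "-g2"] sm_neg_right[of f g2] by simp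

lemma sm_sum_left: "skew_mult \<theta> (\<Sum>i\<in>A. p i) g = (\<Sum>i\<in>A. skew_mult \<theta> (p i) g)"
  by (induction A rule: infinite_finite_induct) (auto simp: sm_add_left)

lemma sm_sum_right: "skew_mult \<theta> f (\<Sum>i\<in>A. p i) = (\<Sum>i\<in>A. skew_mult \<theta> f (p i))"
  by (induction A rule: infinite_finite_induct) (auto simp: sm_add_right)

lemma sm_monom: "skew_mult \<theta> (monom c k) g = monom c k * TP k g"
proof -
  have "skew_mult \<theta> (monom c k) g = (\<Sum>i\<le>k. monom (coeff (monom c k) i) i * TP i g)"
    by (rule repN) (simp add: degree_monom_le)
  also have "\<dots> = (\<Sum>i\<le>k. if i = k then monom c k * TP k g else 0)"
    by (rule sum.cong) (auto simp: coeff_monom)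
  finally show ?thesis by simp
qed

lemma smult_sum_right: "Polynomial.smult r (\<Sum>i\<in>A. p i) = (\<Sum>i\<in>A. Polynomial.smult r (p i))"
  by (induction A rule: infinite_finite_induct) (auto simp: smult_add_right)

lemma sm_smult_left: "skew_mult \<theta> (Polynomial.smult r f) g = Polynomial.smult r (skew_mult \<theta> f g)"
proof -
  have "degree (Polynomial.smult r f) \<le> degree f" by (rule degree_smult_le)
  then show ?thesis
    using repN[of "Polynomial.smult r f" "degree f" g] by (simp add: rep smult_sum_right smult_monom_mult)
qed

lemma sm_const: "skew_mult \<theta> [:r:] g = Polynomial.smult r g"
  using sm_monom[of r 0 g] by (simp add: monom_0)

lemma assoc_monom: "skew_mult \<theta> (skew_mult \<theta> (monom c i) (monom d j)) h
   = skew_mult \<theta> (monom c i) (skew_mult \<theta> (monom d j) h)"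
  by (simp add: sm_monom TP_monom TP_monom_mult TP_TP mult_monom mult.assoc[symmetric] add.commute)

lemma sm_assoc: "skew_mult \<theta> (skew_mult \<theta> f g) h = skew_mult \<theta> f (skew_mult \<theta> g h)"
proof -
  have "skew_mult \<theta> (skew_mult \<theta> f g) h = skew_mult \<theta> (skew_mult \<theta> (\<Sum>i\<le>degree f. monom (coeff f i) i) (\<Sum>j\<le>degree g. monom (coeff g j) j)) h"
    by (simp only: poly_as_sum_of_monoms)
  also have "\<dots> = (\<Sum>i\<le>degree f. \<Sum>j\<le>degree g.
      skew_mult \<theta> (skew_mult \<theta> (monom (coeff f i) i) (monom (coeff g j) j)) h)"
    by (simp only: sm_sum_left sm_sum_right) (rule sum.swap)
  also have "\<dots> = (\<Sum>i\<le>degree f. \<Sum>j\<le>degree g.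
      skew_mult \<theta> (monom (coeff f i) i) (skew_mult \<theta> (monom (coeff g j) j) h))"
    by (simp add: assoc_monom)
  also have "\<dots> = skew_mult \<theta> (\<Sum>i\<le>degree f. monom (coeff f i) i) (skew_mult \<theta> (\<Sum>j\<le>degree g. monom (coeff g j) j) h)"
    by (simp only: sm_sum_left sm_sum_right) (rule sum.swap)
  also have "\<dots> = skew_mult \<theta> f (skew_mult \<theta> g h)"
    by (simp only: poly_as_sum_of_monoms)
  finally show ?thesis .
qed


lemma coeff_sm_0: "coeff (skew_mult \<theta> e g) 0 = coeff e 0 * coeff g 0"
  unfolding rep coeff_sum
  by (subst sum.remove[of _ 0]) (auto simp: coeff_monom_mult intro!: sum.neutral)

lemma coeff_sm_top:
  assumes "e \<noteq> 0" "\<forall>k>N. coeff g k = 0"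
  shows "coeff (skew_mult \<theta> e g) (degree e + N) = lead_coeff e * (\<theta>^^degree e) (coeff g N)"
proof -
  have H: "coeff g (degree e + N - x) = 0" if "x < degree e" for x
    using assms(2) that by auto
  have Z: "(\<Sum>x\<in>{..degree e} - {degree e}. coeff e x * (\<theta> ^^ x) (coeff g (degree e + N - x))) = 0"
  proof (rule sum.neutral, rule ballI)
    fix x assume "x \<in> {..degree e} - {degree e}"
    then have "x < degree e" by auto
    then show "coeff e x * (\<theta> ^^ x) (coeff g (degree e + N - x)) = 0"
      using H[of x] by simp
  qed
  show ?thesis
    unfolding rep coeff_sum
    by (subst sum.remove[of _ "degree e"]) (simp_all add: Z coeff_monom_mult)
qed

lemma TP_diff: "TP i (p - q) = TP i p - TP i q"
  by (rule poly_eqI) (simp add: T_diff)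

lemma sm_xn: "skew_mult \<theta> p (xn_minus n b) = p * monom 1 n - (\<Sum>i\<le>degree p. monom (coeff p i * (\<theta>^^i) b) i)"
proof -
  have "skew_mult \<theta> p (xn_minus n b) = (\<Sum>i\<le>degree p. monom (coeff p i) i * monom 1 n - monom (coeff p i * (\<theta>^^i) b) i)"
    unfolding rep xn_minus_def
    by (rule sum.cong) (simp_all add: TP_diff TP_monom monom_0[symmetric] right_diff_distrib mult_monom)
  also have "\<dots> = (\<Sum>i\<le>degree p. monom (coeff p i) i) * monom 1 n - (\<Sum>i\<le>degree p. monom (coeff p i * (\<theta>^^i) b) i)"
    by (simp add: sum_subtractf sum_distrib_right)
  finally show ?thesis by (simp add: poly_as_sum_of_monoms)
qed

definition cg where "cg n b p q \<longleftrightarrow> skew_cong \<theta> n b p q"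

lemma cong_refl: "skew_cong \<theta> n b p p"
  unfolding skew_cong_def by (rule exI[of _ 0]) simp

lemma cong_sym: "skew_cong \<theta> n b p q \<Longrightarrow> skew_cong \<theta> n b q p"
  unfolding skew_cong_def by (metis minus_diff_eq sm_neg_left)

lemma cong_trans: "skew_cong \<theta> n b p q \<Longrightarrow> skew_cong \<theta> n b q r \<Longrightarrow> skew_cong \<theta> n b p r"
  unfolding skew_cong_def by (metis diff_add_cancel add_diff_eq sm_add_left)

lemma cong_add: "skew_cong \<theta> n b p q \<Longrightarrow> skew_cong \<theta> n b p' q' \<Longrightarrow> skew_cong \<theta> n b (p + p') (q + q')"
  unfolding skew_cong_def by (metis add_diff_add sm_add_left)

lemma cong_smult: "skew_cong \<theta> n b p q \<Longrightarrow> skew_cong \<theta> n b (Polynomial.smult r p) (Polynomial.smult r q)"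
  unfolding skew_cong_def by (metis smult_diff_right sm_smult_left)

lemma cong_sum: "(\<And>i. i \<in> A \<Longrightarrow> skew_cong \<theta> n b (p i) (q i)) \<Longrightarrow> skew_cong \<theta> n b (\<Sum>i\<in>A. p i) (\<Sum>i\<in>A. q i)"
  by (induction A rule: infinite_finite_induct) (auto simp: cong_refl cong_add)

lemma div_ex: assumes "n \<ge> 1" shows "\<exists>q. degree (p - skew_mult \<theta> q (xn_minus n b)) < n"
proof (induction "degree p" arbitrary: p rule: less_induct)
  case less
  show ?case
  proof (cases "degree p < n")
    case True
    then show ?thesis by (intro exI[of _ 0]) simp
  next
    case False
    define d where "d = degree p"
    define q0 where "q0 = monom (lead_coeff p) (d - n)"
    have S: "skew_mult \<theta> q0 (xn_minus n b) = monom (lead_coeff p) d - monom (lead_coeff p * (\<theta>^^(d-n)) b) (d - n)"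
      using False unfolding q0_def sm_monom xn_minus_def d_def
      by (simp add: TP_diff TP_monom monom_0[symmetric] right_diff_distrib mult_monom)
    define p' where "p' = p - skew_mult \<theta> q0 (xn_minus n b)"
    have "coeff p' k = 0" if "k > d - 1" for k
    proof (cases "k = d")
      case True
      then show ?thesis using assms False unfolding p'_def S d_def by (auto simp: coeff_monom)
    next
      case False
      then have "k > d" using that by simp
      then show ?thesis unfolding p'_def S d_def by (auto simp: coeff_monom coeff_eq_0)
    qed
    then have "degree p' \<le> d - 1" by (intro degree_le) auto
    then have "degree p' < degree p" using False assms unfolding d_def by linarith
    then obtain q' where q': "degree (p' - skew_mult \<theta> q' (xn_minus n b)) < n" using less by blast
    have "p - skew_mult \<theta> (q0 + q') (xn_minus n b) = p' - skew_mult \<theta> q' (xn_minus n b)"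
      unfolding p'_def by (simp add: sm_add_left)
    then show ?thesis using q' by metis
  qed
qed

lemma coeff_sum_monom: "coeff (\<Sum>i<n. monom (v i) i) k = (if k < n then v k else 0)"
  by (simp add: coeff_sum coeff_monom)

lemma vb_ex: assumes "n \<ge> 1"
  shows "\<exists>c. c \<in> carrier_vec n \<and> skew_cong \<theta> n b p (\<Sum>i<n. monom (c $ i) i)"
proof -
  obtain q where q: "degree (p - skew_mult \<theta> q (xn_minus n b)) < n" using div_ex[OF assms] by blast
  define r where "r = p - skew_mult \<theta> q (xn_minus n b)"
  have "(\<Sum>i<n. monom (vec n (coeff r) $ i) i) = (\<Sum>i<n. monom (coeff r i) i)"
    by (rule sum.cong) auto
  also have "\<dots> = r"
  proof -
    have "degree r < n" using q r_def by simp
    then show ?thesis by (intro poly_eqI) (auto simp: coeff_sum_monom coeff_eq_0)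
  qed
  finally have "skew_cong \<theta> n b p (\<Sum>i<n. monom (vec n (coeff r) $ i) i)"
    unfolding skew_cong_def r_def by auto
  then show ?thesis by (intro exI[of _ "vec n (coeff r)"]) auto
qed

lemma vb_uniq: assumes "n \<ge> 1" "c \<in> carrier_vec n" "c' \<in> carrier_vec n"
  "skew_cong \<theta> n b p (\<Sum>i<n. monom (c $ i) i)" "skew_cong \<theta> n b p (\<Sum>i<n. monom (c' $ i) i)"
  shows "c = c'"
proof -
  have "skew_cong \<theta> n b (\<Sum>i<n. monom (c $ i) i) (\<Sum>i<n. monom (c' $ i) i)"
    using assms cong_sym cong_trans by blast
  then obtain q where q: "(\<Sum>i<n. monom (c $ i) i) - (\<Sum>i<n. monom (c' $ i) i) = skew_mult \<theta> q (xn_minus n b)"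
    unfolding skew_cong_def by blast
  have "q = 0"
  proof (rule ccontr)
    assume "q \<noteq> 0"
    have "\<forall>k>n. coeff (xn_minus n b) k = 0" using assms(1) by (auto simp: xn_minus_def coeff_monom coeff_pCons split: nat.split)
    have "coeff (skew_mult \<theta> q (xn_minus n b)) (degree q + n) = lead_coeff q"
    proof -
      have "coeff (xn_minus n b) n = 1" using assms(1) by (cases n) (auto simp: xn_minus_def)
      then show ?thesis using coeff_sm_top[OF \<open>q \<noteq> 0\<close> \<open>\<forall>k>n. coeff (xn_minus n b) k = 0\<close>] by simp
    qed
    moreover have "coeff ((\<Sum>i<n. monom (c $ i) i) - (\<Sum>i<n. monom (c' $ i) i)) (degree q + n) = 0"
      by (simp add: coeff_sum_monom)
    ultimately show False using q \<open>q \<noteq> 0\<close> by simp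
  qed
  then have E: "(\<Sum>i<n. monom (c $ i) i) = (\<Sum>i<n. monom (c' $ i) i)" using q by simp
  show ?thesis
  proof (rule eq_vecI)
    fix i assume "i < dim_vec c'"
    then have "i < n" using assms by simp
    then show "c $ i = c' $ i" using arg_cong[OF E, of "\<lambda>p. coeff p i"] by (simp add: coeff_sum_monom)
  qed (use assms in simp)
qed

lemma vb_char: assumes "n \<ge> 1"
  shows "vb \<theta> n b p \<in> carrier_vec n \<and> skew_cong \<theta> n b p (\<Sum>i<n. monom (vb \<theta> n b p $ i) i)"
  unfolding vb_def by (rule theI') (use vb_ex[OF assms] vb_uniq[OF assms] in blast)

lemma vb_eq: assumes "n \<ge> 1" "c \<in> carrier_vec n" "skew_cong \<theta> n b p (\<Sum>i<n. monom (c $ i) i)"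
  shows "vb \<theta> n b p = c"
  using vb_char[OF assms(1)] vb_uniq[OF assms(1)] assms by blast


lemma key:
  assumes n: "n \<ge> 1" and a: "a \<noteq> 0" and hg: "xn_minus n a = skew_mult \<theta> h g"
  shows "skew_mult \<theta> (xn_minus n (skew_gamma \<theta> n a g)) g = skew_mult \<theta> (TP n g) (xn_minus n a)"
proof -
  define c where "c = skew_gamma \<theta> n a g"
  have "coeff (xn_minus n a) 0 = - a" using n by (simp add: xn_minus_def coeff_monom)
  then have "coeff h 0 * coeff g 0 = - a" using hg coeff_sm_0 by simp
  then have g0: "coeff g 0 \<noteq> 0" using a by auto
  then have gnz: "g \<noteq> 0" by auto
  define L where "L = skew_mult \<theta> (xn_minus n c) g"
  define R where "R = skew_mult \<theta> (TP n g) (xn_minus n a)"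
  define S where "S = (\<Sum>i\<le>degree (TP n g). monom (coeff (TP n g) i * (\<theta>^^i) a) i)"
  have L: "L = monom 1 n * TP n g - Polynomial.smult c g"
    unfolding L_def xn_minus_def by (simp add: sm_diff_left sm_monom sm_const)
  have R: "R = TP n g * monom 1 n - S"
    unfolding R_def S_def by (rule sm_xn)
  have d: "L - R = S - Polynomial.smult c g"
    unfolding L R by (simp add: mult.commute)
  have dhi: "coeff (L - R) k = 0" if "k > degree g" for k
  proof -
    have "coeff S k = 0"
      unfolding S_def coeff_sum
      by (rule sum.neutral) (use that degree_TP[of n g] in \<open>auto simp: coeff_monom\<close>)
    then show ?thesis unfolding d using that by (simp add: coeff_eq_0)
  qed
  have d0: "coeff (L - R) 0 = 0"
  proof -
    have "coeff S 0 = (\<theta>^^n) (coeff g 0) * a"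
      unfolding S_def coeff_sum by (simp add: coeff_monom)
    then show ?thesis unfolding d c_def skew_gamma_def using g0 by (simp add: field_simps)
  qed
  define e where "e = xn_minus n c - skew_mult \<theta> (TP n g) h"
  have eg: "skew_mult \<theta> e g = L - R"
    unfolding e_def L_def R_def by (simp add: sm_diff_left sm_assoc hg)
  have "e = 0"
  proof (rule ccontr)
    assume enz: "e \<noteq> 0"
    have "coeff e 0 * coeff g 0 = 0" using eg d0 coeff_sm_0[of e g] by simp
    then have e0: "coeff e 0 = 0" using g0 by simp
    have "degree e \<noteq> 0"
    proof
      assume "degree e = 0"
      then have "e = 0" using e0 by (metis degree_0_id pCons_0_0)  
      then show False using enz by simp
    qed
    have "\<forall>k>degree g. coeff g k = 0" by (simp add: coeff_eq_0)
    from coeff_sm_top[OF enz this]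
    have "coeff (L - R) (degree e + degree g) = lead_coeff e * (\<theta>^^degree e) (lead_coeff g)"
      using eg by simp
    moreover have "lead_coeff e * (\<theta>^^degree e) (lead_coeff g) \<noteq> 0" using enz gnz by simp
    moreover have "coeff (L - R) (degree e + degree g) = 0"
      using dhi \<open>degree e \<noteq> 0\<close> by simp
    ultimately show False by simp
  qed
  then have "L - R = 0" using eg by simp
  then show ?thesis unfolding L_def R_def c_def by simp
qed

lemma cong_transfer:
  assumes K: "skew_mult \<theta> (xn_minus n c) g = skew_mult \<theta> P (xn_minus n a)"
    and pq: "skew_cong \<theta> n c p q"
  shows "skew_cong \<theta> n a (skew_mult \<theta> p g) (skew_mult \<theta> q g)"
proof -
  obtain Q where Q: "p - q = skew_mult \<theta> Q (xn_minus n c)" using pq unfolding skew_cong_def by blast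
  have "skew_mult \<theta> p g - skew_mult \<theta> q g = skew_mult \<theta> (skew_mult \<theta> Q P) (xn_minus n a)"
    by (simp add: sm_diff_left[symmetric] Q sm_assoc K)
  then show ?thesis unfolding skew_cong_def by blast
qed

end

theorem theorem5p3:
  fixes \<theta> :: "'a::{field,finite} \<Rightarrow> 'a"
    and n :: nat and a :: 'a and f g h :: "'a poly"
  assumes "field_aut \<theta>"
    and "a \<noteq> 0"
    and "xn_minus n a = skew_mult \<theta> h g"
  shows "skew_circulant \<theta> n a (skew_mult \<theta> f g) =
         skew_circulant \<theta> n (skew_gamma \<theta> n a g) f * skew_circulant \<theta> n a g"
proof (cases "n = 0")
  case True
  then show ?thesis by (intro eq_matI) (auto simp: skew_circulant_def)
next
  case False
  then have n: "n \<ge> 1" by simp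
  interpret skew \<theta> by unfold_locales (rule assms(1))
  define c where "c = skew_gamma \<theta> n a g"
  have K: "skew_mult \<theta> (xn_minus n c) g = skew_mult \<theta> (TP n g) (xn_minus n a)"
    unfolding c_def by (rule key[OF n assms(2,3)])
  define A where "A = skew_circulant \<theta> n c f"
  define B where "B = skew_circulant \<theta> n a g"
  have dA: "A \<in> carrier_mat n n" and dB: "B \<in> carrier_mat n n"
    unfolding A_def B_def skew_circulant_def by auto
  have entry: "vb \<theta> n a (skew_mult \<theta> (monom 1 i) (skew_mult \<theta> f g)) $ j = (A * B) $$ (i, j)"
    if i: "i < n" and j: "j < n" for i j
  proof -
    define r where "r = vb \<theta> n c (skew_mult \<theta> (monom 1 i) f)"
    define s where "s k = vb \<theta> n a (skew_mult \<theta> (monom 1 k) g)" for k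
    define F where "F j = (\<Sum>k<n. r $ k * s k $ j)" for j
    have r: "r \<in> carrier_vec n" "skew_cong \<theta> n c (skew_mult \<theta> (monom 1 i) f) (\<Sum>k<n. monom (r $ k) k)"
      using vb_char[OF n] unfolding r_def by auto
    have s: "skew_cong \<theta> n a (skew_mult \<theta> (monom 1 k) g) (\<Sum>j<n. monom (s k $ j) j)" for k
      using vb_char[OF n] unfolding s_def by auto
    have "skew_cong \<theta> n a (skew_mult \<theta> (skew_mult \<theta> (monom 1 i) f) g) (skew_mult \<theta> (\<Sum>k<n. monom (r $ k) k) g)"
      by (rule cong_transfer[OF K r(2)])
    moreover have "skew_mult \<theta> (\<Sum>k<n. monom (r $ k) k) g = (\<Sum>k<n. Polynomial.smult (r $ k) (skew_mult \<theta> (monom 1 k) g))"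
      by (simp add: sm_sum_left sm_smult_left[symmetric] smult_monom)
    moreover have "skew_cong \<theta> n a (\<Sum>k<n. Polynomial.smult (r $ k) (skew_mult \<theta> (monom 1 k) g))
        (\<Sum>k<n. Polynomial.smult (r $ k) (\<Sum>j<n. monom (s k $ j) j))"
      by (intro cong_sum cong_smult s)
    moreover have "(\<Sum>k<n. Polynomial.smult (r $ k) (\<Sum>j<n. monom (s k $ j) j)) = (\<Sum>j<n. monom (vec n F $ j) j)"
      by (rule poly_eqI) (auto simp: coeff_sum coeff_sum_monom F_def)
    ultimately have "skew_cong \<theta> n a (skew_mult \<theta> (monom 1 i) (skew_mult \<theta> f g)) (\<Sum>j<n. monom (vec n F $ j) j)"
      by (metis sm_assoc cong_trans)
    then have "vb \<theta> n a (skew_mult \<theta> (monom 1 i) (skew_mult \<theta> f g)) = vec n F"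
      by (intro vb_eq[OF n]) auto
    then have "vb \<theta> n a (skew_mult \<theta> (monom 1 i) (skew_mult \<theta> f g)) $ j = (\<Sum>k<n. r $ k * s k $ j)"
      using j by (simp add: F_def)
    also have "\<dots> = (A * B) $$ (i, j)"
      using i j dA dB unfolding A_def B_def
      by (simp add: scalar_prod_def skew_circulant_def r_def s_def lessThan_atLeast0)
    finally show ?thesis .
  qed
  show ?thesis
    unfolding A_def[symmetric] B_def[symmetric] c_def[symmetric]
    by (rule eq_matI) (use dA dB entry in \<open>auto simp: skew_circulant_def\<close>)
qed

end
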